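(* Let $n\geq 3$ and let $k\in\mathbb{Z}_n$ with $k\neq 0$ and $2k\not\equiv 0\pmod n$. Let $C$ be a subset of the vertex set of the generalized Petersen graph $\mathrm{GP}(n,k)$. Then $C$ is a perfect code in $\mathrm{GP}(n,k)$ if and only if $n\equiv 0\pmod 4$, $k\equiv 1\pmod 2$, and $$C=\{u_{4i+j},\,v_{4i+j+2}\mid i\in\mathbb{Z}_n\}$$ for some $j\in\{0,1,2,3\}$ (indices taken modulo $n$).
   Context: For an integer $n\geq 3$ and a nonzero $k\in\mathbb{Z}_n$, the generalized Petersen graph $\mathrm{GP}(n,k)$ is the simple graph with vertex set $\{u_i,v_i\mid i\in\mathbb{Z}_n\}$ ($2n$ vertices) and edges $u_iu_{i+1}$, $u_iv_i$, $v_iv_{i+k}$ for all $i\in\mathbb{Z}_n$ (all indices modulo $n$). Standing assumption: $2k\not\equiv 0\pmod n$, so that $\mathrm{GP}(n,k)$ is 3-regular. Since $k$ is only defined modulo $n$, a congruence such as $k\equiv 1\pmod 2$ with $n$ even is well defined. A perfect code in a graph $\Gamma$ is an independent set $C\subseteq V(\Gamma)$ such that every vertex not in $C$ is adjacent to exactly one vertex of $C$. *)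

theory Defs
  imports Main
begin

text \<open>Vertices of GP(n,k): outer vertices u_i and inner vertices v_i, i in Z_n
  represented by 0..n-1.\<close>
datatype gpv = U nat | V nat

definition gp_verts :: "nat \<Rightarrow> gpv set" where
  "gp_verts n = {U i | i. i < n} \<union> {V i | i. i < n}"

definition gp_edge :: "nat \<Rightarrow> nat \<Rightarrow> gpv \<Rightarrow> gpv \<Rightarrow> bool" where
  "gp_edge n k x y \<longleftrightarrow> (\<exists>i<n.
      (x = U i \<and> y = U ((i + 1) mod n)) \<or>
      (x = U i \<and> y = V i) \<or>
      (x = V i \<and> y = V ((i + k) mod n)))"

definition gp_adj :: "nat \<Rightarrow> nat \<Rightarrow> gpv \<Rightarrow> gpv \<Rightarrow> bool" where
  "gp_adj n k x y \<longleftrightarrow> gp_edge n k x y \<or> gp_edge n k y x"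

definition perfect_code :: "gpv set \<Rightarrow> (gpv \<Rightarrow> gpv \<Rightarrow> bool) \<Rightarrow> gpv set \<Rightarrow> bool" where
  "perfect_code Vs adj C \<longleftrightarrow> C \<subseteq> Vs \<and>
     (\<forall>x\<in>C. \<forall>y\<in>C. \<not> adj x y) \<and>
     (\<forall>x\<in>Vs - C. \<exists>!c. c \<in> C \<and> adj x c)"

end

theory Submission
  imports Defs
begin


lemma mod2: "(a::nat) < 2*n \<Longrightarrow> a mod n = (if a < n then a else a - n)"
  by (simp add: le_mod_geq)

lemma adjU:
  assumes "n \<ge> 3" "i < n"
  shows "gp_adj n k (U i) y \<longleftrightarrow> y = U ((i+1) mod n) \<or> y = U ((i+(n-1)) mod n) \<or> y = V i"
proof
  assume "gp_adj n k (U i) y"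
  then consider "y = U ((i+1) mod n)" | "y = V i" | i' where "i' < n" "y = U i'" "i = (i'+1) mod n"
    unfolding gp_adj_def gp_edge_def by auto
  then show "y = U ((i+1) mod n) \<or> y = U ((i+(n-1)) mod n) \<or> y = V i"
  proof cases
    case (3 i')
    have "i' = (i + (n-1)) mod n" using 3 assms by (auto simp: mod2)
    then show ?thesis using 3 by auto
  qed auto
next
  assume "y = U ((i+1) mod n) \<or> y = U ((i+(n-1)) mod n) \<or> y = V i"
  then show "gp_adj n k (U i) y"
  proof (elim disjE)
    assume "y = U ((i+1) mod n)" then show ?thesis using assms unfolding gp_adj_def gp_edge_def by auto
  next
    assume y: "y = U ((i+(n-1)) mod n)"
    have "((i+(n-1)) mod n + 1) mod n = i" using assms by (auto simp: mod2)
    then have "gp_edge n k y (U i)" unfolding gp_edge_def using y assms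
      by (intro exI[of _ "(i+(n-1)) mod n"]) auto
    then show ?thesis unfolding gp_adj_def by auto
  next
    assume "y = V i" then show ?thesis using assms unfolding gp_adj_def gp_edge_def by auto
  qed
qed

lemma adjV:
  assumes "0 < k" "k < n" "i < n"
  shows "gp_adj n k (V i) y \<longleftrightarrow> y = U i \<or> y = V ((i+k) mod n) \<or> y = V ((i+(n-k)) mod n)"
proof
  assume "gp_adj n k (V i) y"
  then consider "y = U i" | "y = V ((i+k) mod n)" | i' where "i' < n" "y = V i'" "i = (i'+k) mod n"
    unfolding gp_adj_def gp_edge_def by auto
  then show "y = U i \<or> y = V ((i+k) mod n) \<or> y = V ((i+(n-k)) mod n)"
  proof cases
    case (3 i')
    have "i' = (i + (n-k)) mod n" using 3 assms by (auto simp: mod2)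
    then show ?thesis using 3 by auto
  qed auto
next
  assume "y = U i \<or> y = V ((i+k) mod n) \<or> y = V ((i+(n-k)) mod n)"
  then show "gp_adj n k (V i) y"
  proof (elim disjE)
    assume "y = U i" then show ?thesis using assms unfolding gp_adj_def gp_edge_def by auto
  next
    assume "y = V ((i+k) mod n)" then show ?thesis using assms unfolding gp_adj_def gp_edge_def by auto
  next
    assume y: "y = V ((i+(n-k)) mod n)"
    have "((i+(n-k)) mod n + k) mod n = i" using assms by (auto simp: mod2)
    then have "gp_edge n k y (V i)" unfolding gp_edge_def using y assms
      by (intro exI[of _ "(i+(n-k)) mod n"]) auto
    then show ?thesis unfolding gp_adj_def by auto
  qed
qed



lemma one4_iff: "(of_bool a + of_bool b + of_bool c + of_bool d = (1::int)) \<longleftrightarrow>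
  (a \<and> \<not>b \<and> \<not>c \<and> \<not>d) \<or> (\<not>a \<and> b \<and> \<not>c \<and> \<not>d) \<or> (\<not>a \<and> \<not>b \<and> c \<and> \<not>d) \<or> (\<not>a \<and> \<not>b \<and> \<not>c \<and> d)"
  by (cases a; cases b; cases c; cases d; simp)

lemma sum_shift:
  fixes g :: "nat \<Rightarrow> int"
  assumes "\<forall>i. g (i + n) = g i"
  shows "(\<Sum>i<n. g (i + c)) = (\<Sum>i<n. g i)"
proof (induction c)
  case 0 then show ?case by simp
next
  case (Suc c)
  define G where "G i = g (i + c)" for i
  have "(\<Sum>i<Suc n. G i) = G 0 + (\<Sum>i<n. G (Suc i))" by (rule sum.lessThan_Suc_shift)
  moreover have "(\<Sum>i<Suc n. G i) = (\<Sum>i<n. G i) + G n" by simp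
  moreover have "G n = G 0" unfolding G_def using assms by (metis add.commute add_0)
  ultimately have "(\<Sum>i<n. G (Suc i)) = (\<Sum>i<n. G i)" by simp
  then show ?case using Suc unfolding G_def by simp
qed

lemma per_mod:
  fixes g :: "nat \<Rightarrow> 'b"
  assumes "\<forall>i. g (i + n) = g i"
  shows "g (i mod n) = g i"
proof -
  have "g (i mod n + n * q) = g (i mod n)" for q
  proof (induction q)
    case (Suc q)
    have e: "i mod n + n * Suc q = (i mod n + n*q) + n" by simp
    show ?case using assms Suc.IH e by metis
  qed simp
  from this[of "i div n"] show ?thesis by simp
qed

lemma ptL: "of_bool a + of_bool b + of_bool c + of_bool hb = (1::int) \<Longrightarrow>
  of_bool b + of_bool c + of_bool e + of_bool hc = (1::int) \<Longrightarrow>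
  of_bool (hb \<and> hc) - of_bool (a \<and> e) = (1::int) - of_bool a - of_bool b - of_bool c - of_bool e"
  by (cases a; cases b; cases c; cases e; cases hb; cases hc; simp)

lemma pt2L: "of_bool f1 + of_bool g1 + of_bool B1 + of_bool A1 = (1::int) \<Longrightarrow>
  of_bool f2 + of_bool g2 + of_bool B2 + of_bool A2 = (1::int) \<Longrightarrow>
  of_bool f0 + of_bool f1 + of_bool f2 + of_bool g1 = (1::int) \<Longrightarrow>
  of_bool f1 + of_bool f2 + of_bool f3 + of_bool g2 = (1::int) \<Longrightarrow>
  of_bool (A1 \<and> A2) + of_bool (B1 \<and> B2) \<le> (of_bool (f0 \<and> f3) :: int)"
  by (cases f0; cases f1; cases f2; cases f3; cases g1; cases g2; cases A1; cases A2; cases B1; cases B2; simp)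

lemma f4L: "of_bool f0 + of_bool f1 + of_bool f2 + of_bool h1 = (1::int) \<Longrightarrow>
  of_bool f1 + of_bool f2 + of_bool f3 + of_bool h2 = (1::int) \<Longrightarrow>
  of_bool f2 + of_bool f3 + of_bool f4 + of_bool h3 = (1::int) \<Longrightarrow>
  \<not>(f0 \<and> f3) \<Longrightarrow> \<not>(f1 \<and> f4) \<Longrightarrow> \<not>(h1 \<and> h2) \<Longrightarrow> \<not>(h2 \<and> h3) \<Longrightarrow>
  (f4 = f0) \<and> (f0 \<longrightarrow> \<not>f1 \<and> \<not>f2 \<and> \<not>f3)"
  by (cases f0; cases f1; cases f2; cases f3; cases f4; cases h1; cases h2; cases h3; simp)

lemma m4: "(a::nat) < 4 \<Longrightarrow> a = 0 \<or> a = 1 \<or> a = 2 \<or> a = 3" by auto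

lemma modM1: assumes "d + t = x + (n::nat)" "n mod 4 = 0" shows "(d mod 4 = 0) = (x mod 4 = t mod 4)"
proof -
  have "(d+t) mod 4 = (x+n) mod 4" using assms(1) by simp
  also have "\<dots> = (x mod 4 + n mod 4) mod 4" by (rule mod_add_eq[symmetric])
  also have "\<dots> = x mod 4" using assms(2) by simp
  finally have "(d mod 4 + t mod 4) mod 4 = x mod 4" by (simp add: mod_add_eq)
  then show ?thesis using m4[of "d mod 4"] m4[of "t mod 4"] by auto
qed

lemma M2: assumes "(y::nat) + 1 = x + n" "n mod 4 = 0" "j < 4"
  shows "(\<not> y mod 4 = j \<and> \<not> (y+1) mod 4 = j \<and> \<not> (y+2) mod 4 = j) = (x mod 4 = (j+2) mod 4)"
proof -
  have r: "(y+1) mod 4 = x mod 4" using assms(1,2) by (metis add.right_neutral mod_add_eq mod_mod_trivial)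
  have a: "y mod 4 = (x mod 4 + 3) mod 4"
  proof -
    have "y mod 4 = ((y+1)+3) mod 4" by simp
    also have "\<dots> = ((y+1) mod 4 + 3) mod 4" by (simp add: mod_add_left_eq)
    finally show ?thesis using r by simp
  qed
  have b: "(y+2) mod 4 = (x mod 4 + 1) mod 4"
  proof -
    have "(y+2) mod 4 = ((y+1)+1) mod 4" by simp
    also have "\<dots> = ((y+1) mod 4 + 1) mod 4" by (rule mod_add_left_eq[symmetric])
    finally show ?thesis using r by simp
  qed
  show ?thesis unfolding a b r using m4[of "x mod 4"] m4[of j] assms(3) by auto
qed

lemma M3: "(k::nat) mod 2 \<noteq> 1 \<Longrightarrow> ((t+2+k) mod 4 = t mod 4) \<or> ((t+2+k) mod 4 = (t mod 4 + 2) mod 4)"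
proof -
  assume "k mod 2 \<noteq> 1"
  then have "k mod 4 = 0 \<or> k mod 4 = 2" by presburger
  moreover have "(t+2+k) mod 4 = ((t+2) mod 4 + k mod 4) mod 4" by (rule mod_add_eq[symmetric])
  moreover have "(t+2) mod 4 = (t mod 4 + 2) mod 4" by (rule mod_add_left_eq[symmetric])
  ultimately show ?thesis using m4[of "t mod 4"] by auto
qed

lemma L0: "int n = 4 * (M::int) \<Longrightarrow> n mod 4 = 0" by presburger

lemma core:
  fixes f h :: "nat \<Rightarrow> bool" and n k :: nat
  assumes n3: "n \<ge> 3" and k0: "0 < k" and kn: "k < n"
    and fp: "\<forall>i. f (i + n) = f i" and hp: "\<forall>i. h (i + n) = h i"
    and O: "\<forall>i. of_bool (f i) + of_bool (f (i+1)) + of_bool (f (i+2)) + of_bool (h (i+1)) = (1::int)"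
    and I: "\<forall>i. of_bool (f (i+k)) + of_bool (h (i+k)) + of_bool (h (i+2*k)) + of_bool (h i) = (1::int)"
  shows "n mod 4 = 0 \<and> k mod 2 = 1 \<and> (\<exists>j<4. (\<forall>x. f x \<longleftrightarrow> x mod 4 = j) \<and> (\<forall>x. h x \<longleftrightarrow> x mod 4 = (j+2) mod 4))"
proof -
  define F where "F i = (of_bool (f i) :: int)" for i
  define H where "H i = (of_bool (h i) :: int)" for i
  have Fp: "\<forall>i. F (i + n) = F i" using fp by (simp add: F_def)
  have Hp: "\<forall>i. H (i + n) = H i" using hp by (simp add: H_def)
  define M where "M = (\<Sum>i<n. F i)"
  define S where "S = (\<Sum>i<n. H i)"
  have sF: "(\<Sum>i<n. F (i + c)) = M" for c using sum_shift[OF Fp] M_def by simp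
  have sH: "(\<Sum>i<n. H (i + c)) = S" for c using sum_shift[OF Hp] S_def by simp
  have "(\<Sum>i<n. F i + F (i+1) + F (i+2) + H (i+1)) = (\<Sum>i<n. (1::int))"
    using O by (simp add: F_def H_def)
  then have e1: "M + M + M + S = int n" by (simp only: sum.distrib sF sH M_def[symmetric]) simp
  have "(\<Sum>i<n. F (i+k) + H (i+k) + H (i+2*k) + H i) = (\<Sum>i<n. (1::int))"
    using I by (simp add: F_def H_def)
  then have e2: "M + S + S + S = int n" by (simp only: sum.distrib sF sH S_def[symmetric]) simp
  have n4: "int n = 4 * M" using e1 e2 by linarith
  have Ob: "\<And>i. (f i \<and> \<not>f (i+1) \<and> \<not>f (i+2) \<and> \<not>h (i+1)) \<or> (\<not>f i \<and> f (i+1) \<and> \<not>f (i+2) \<and> \<not>h (i+1))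
     \<or> (\<not>f i \<and> \<not>f (i+1) \<and> f (i+2) \<and> \<not>h (i+1)) \<or> (\<not>f i \<and> \<not>f (i+1) \<and> \<not>f (i+2) \<and> h (i+1))"
    using one4_iff[THEN iffD1, OF O[rule_format]] by blast
  have Ib: "\<And>i. (f (i+k) \<and> \<not>h (i+k) \<and> \<not>h (i+2*k) \<and> \<not>h i) \<or> (\<not>f (i+k) \<and> h (i+k) \<and> \<not>h (i+2*k) \<and> \<not>h i)
     \<or> (\<not>f (i+k) \<and> \<not>h (i+k) \<and> h (i+2*k) \<and> \<not>h i) \<or> (\<not>f (i+k) \<and> \<not>h (i+k) \<and> \<not>h (i+2*k) \<and> h i)"
    using one4_iff[THEN iffD1, OF I[rule_format]] by blast
  define p where "p i = (h i \<and> h (i+1))" for i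
  define q where "q i = (f i \<and> f (i+3))" for i
  define P where "P i = (of_bool (p i) :: int)" for i
  define Q where "Q i = (of_bool (q i) :: int)" for i
  have Pp: "\<forall>i. P (i + n) = P i"
  proof
    fix i have "h (i+n) = h i" "h (i+n+1) = h (i+1)" using hp[rule_format, of i] hp[rule_format, of "i+1"] by simp_all
    then show "P (i + n) = P i" unfolding P_def p_def by simp
  qed
  have Qp: "\<forall>i. Q (i + n) = Q i"
  proof
    fix i have e: "i+n+3 = (i+3)+n" by simp
    have "f (i+n) = f i" "f (i+n+3) = f (i+3)" using fp e by metis+
    then show "Q (i + n) = Q i" unfolding Q_def q_def by simp
  qed
  define D where "D = (\<Sum>i<n. P i)"
  define E where "E = (\<Sum>i<n. Q i)"
  have sP: "(\<Sum>i<n. P (i + c)) = D" for c using sum_shift[OF Pp] D_def by simp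
  have sQ: "(\<Sum>i<n. Q (i + c)) = E" for c using sum_shift[OF Qp] E_def by simp
  have pt: "P (i+1) - Q i = 1 - F i - F (i+1) - F (i+2) - F (i+3)" for i
  proof -
    have a: "i + 1 + 1 = i + 2" "i + 1 + 2 = i + 3" by simp_all
    have O2: "of_bool (f (i+1)) + of_bool (f (i+2)) + of_bool (f (i+3)) + of_bool (h (i+2)) = (1::int)"
      using O[rule_format, of "i+1"] by (simp only: a)
    show ?thesis unfolding P_def Q_def p_def q_def F_def a
      by (rule ptL[OF O[rule_format, of i] O2])
  qed
  have "(\<Sum>i<n. P (i+1) - Q i) = (\<Sum>i<n. 1 - F i - F (i+1) - F (i+2) - F (i+3))"
    using pt by simp
  then have "D - E = int n - 4 * M" by (simp only: sum_subtractf sF sP E_def[symmetric] M_def[symmetric]) simp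
  then have DE: "D = E" using n4 by simp
  have pt2: "P (a+1) + P (a+1+2*k) \<le> Q (a+k)" for a
  proof -
    have e: "a + 1 + k = a + k + 1" "a + 2 + k = a + k + 2" "a + 1 + 2*k = a + 2*k + 1" "a + 2 + 2*k = a + 2*k + 2"
      "a + k + 1 + 1 = a + k + 2" "a + k + 1 + 2 = a + k + 3" "a + 1 + 1 = a + 2" "a + 2*k + 1 + 1 = a + 2*k + 2" by simp_all
    have I1: "of_bool (f (a+k+1)) + of_bool (h (a+k+1)) + of_bool (h (a+2*k+1)) + of_bool (h (a+1)) = (1::int)"
      using I[rule_format, of "a+1"] by (simp only: e)
    have I2: "of_bool (f (a+k+2)) + of_bool (h (a+k+2)) + of_bool (h (a+2*k+2)) + of_bool (h (a+2)) = (1::int)"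
      using I[rule_format, of "a+2"] by (simp only: e)
    have O2: "of_bool (f (a+k+1)) + of_bool (f (a+k+2)) + of_bool (f (a+k+3)) + of_bool (h (a+k+2)) = (1::int)"
      using O[rule_format, of "a+k+1"] by (simp only: e)
    show ?thesis unfolding P_def Q_def p_def q_def e
      by (rule pt2L[OF I1 I2 O[rule_format, of "a+k"] O2])
  qed
  have "(\<Sum>a<n. P (a+1) + P (a+1+2*k)) \<le> (\<Sum>a<n. Q (a+k))"
    by (rule sum_mono) (use pt2 in auto)
  then have "D + D \<le> E" by (simp only: sum.distrib add.assoc sP sQ)
  moreover have "D \<ge> 0" unfolding D_def P_def by (simp add: sum_nonneg)
  ultimately have "D = 0" "E = 0" using DE by auto
  have nP: "\<not> p i" for i
  proof -
    have "\<forall>i\<in>{..<n}. P i = 0" using \<open>D = 0\<close> unfolding D_def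
      by (subst sum_nonneg_eq_0_iff[symmetric]) (auto simp: P_def)
    then have "P (i mod n) = 0" using n3 by simp
    then show ?thesis using per_mod[OF Pp, of i] by (simp add: P_def)
  qed
  have nQ: "\<not> q i" for i
  proof -
    have "\<forall>i\<in>{..<n}. Q i = 0" using \<open>E = 0\<close> unfolding E_def
      by (subst sum_nonneg_eq_0_iff[symmetric]) (auto simp: Q_def)
    then have "Q (i mod n) = 0" using n3 by simp
    then show ?thesis using per_mod[OF Qp, of i] by (simp add: Q_def)
  qed
  have f4: "f (i+4) = f i \<and> (f i \<longrightarrow> \<not> f (i+1) \<and> \<not> f (i+2) \<and> \<not> f (i+3))" for i
  proof -
    have e: "i + 1 + 1 = i + 2" "i + 1 + 2 = i + 3" "i + 2 + 1 = i + 3" "i + 2 + 2 = i + 4" "i + 1 + 3 = i + 4" by simp_all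
    have O1: "of_bool (f (i+1)) + of_bool (f (i+2)) + of_bool (f (i+3)) + of_bool (h (i+2)) = (1::int)"
      using O[rule_format, of "i+1"] by (simp only: e)
    have O2: "of_bool (f (i+2)) + of_bool (f (i+3)) + of_bool (f (i+4)) + of_bool (h (i+3)) = (1::int)"
      using O[rule_format, of "i+2"] by (simp only: e)
    have q1: "\<not> (f (i+1) \<and> f (i+4))" using nQ[of "i+1"] unfolding q_def e .
    have p1: "\<not> (h (i+1) \<and> h (i+2))" using nP[of "i+1"] unfolding p_def e .
    have p2: "\<not> (h (i+2) \<and> h (i+3))" using nP[of "i+2"] unfolding p_def e .
    show ?thesis
      by (rule f4L[OF O[rule_format, of i] O1 O2 nQ[of i, unfolded q_def] q1 p1 p2])
  qed
  have M1: "M \<ge> 1" using n4 n3 by linarith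
  obtain t where t: "t < n" "f t"
  proof (rule ccontr)
    assume "\<not> thesis"
    then have "\<forall>i\<in>{..<n}. F i = 0" using that by (auto simp: F_def)
    then have "M = 0" unfolding M_def by simp
    then show False using M1 by simp
  qed
  have n4': "n mod 4 = 0" using n4 by (rule L0)
  have A: "f (t + d) \<longleftrightarrow> d mod 4 = 0" for d
  proof (induction d rule: less_induct)
    case (less d)
    show ?case
    proof (cases "d < 4")
      case True
      then consider "d = 0" | "d = 1" | "d = 2" | "d = 3" by linarith
      then show ?thesis using f4[of t] t(2) by cases simp_all
    next
      case False
      then have "f (t + d) = f (t + (d-4))" using f4[of "t + (d-4)"] by (simp add: add.assoc)
      moreover have "d mod 4 = (d - 4) mod 4" using False by (simp add: le_mod_geq)
      ultimately show ?thesis using less[of "d-4"] False by simp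
    qed
  qed
  have B: "f x \<longleftrightarrow> x mod 4 = t mod 4" for x
  proof -
    have "f x = f (t + (x + n - t))" using fp t(1) by simp
    also have "\<dots> \<longleftrightarrow> (x + n - t) mod 4 = 0" by (rule A)
    also have "\<dots> \<longleftrightarrow> x mod 4 = t mod 4" by (rule modM1[where d = "x+n-t"]) (use n4' t(1) in auto)
    finally show ?thesis .
  qed
  have C: "h x \<longleftrightarrow> x mod 4 = (t mod 4 + 2) mod 4" for x
  proof -
    define y where "y = x + n - 1"
    have "h x = h (y + 1)" using hp n3 unfolding y_def by simp
    also have "\<dots> \<longleftrightarrow> \<not> f y \<and> \<not> f (y+1) \<and> \<not> f (y+2)" using Ob[of y] by blast
    also have "\<dots> \<longleftrightarrow> x mod 4 = (t mod 4 + 2) mod 4" unfolding B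
      by (rule M2) (use n4' n3 in \<open>auto simp: y_def\<close>)
    finally show ?thesis .
  qed
  have kodd: "k mod 2 = 1"
  proof (rule ccontr)
    assume k2: "k mod 2 \<noteq> 1"
    have "h (t+2)" unfolding C by (rule mod_add_left_eq[symmetric])
    moreover from M3[OF k2, of t] have "f (t+2+k) \<or> h (t+2+k)" using B C by auto
    ultimately show False using Ib[of "t+2"] by (simp add: add.commute add.left_commute)
  qed
  show ?thesis using n4' kodd B C by (intro conjI exI[of _ "t mod 4"]) auto
qed



lemma mm4: "(n::nat) mod 4 = 0 \<Longrightarrow> (z mod n) mod 4 = z mod 4"
  by (simp add: mod_mod_cancel mod_0_imp_dvd)

lemma res4: "(x::nat) < 4 \<Longrightarrow> y < 4 \<Longrightarrow> (x + y) mod 4 = 0 \<Longrightarrow> x = (4 - y) mod 4"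
proof -
  assume a: "x < 4" "y < 4" "(x + y) mod 4 = 0"
  from m4[OF a(1)] m4[OF a(2)] a(3) show ?thesis by (elim disjE) simp_all
qed

lemma sub4: assumes "(k::nat) \<le> n" "n mod 4 = 0" shows "(n - k) mod 4 = (4 - k mod 4) mod 4"
proof -
  have "((n-k) mod 4 + k mod 4) mod 4 = 0" using assms by (simp add: mod_add_eq)
  then show ?thesis by (intro res4) auto
qed

lemma setmem:
  fixes n j :: nat
  assumes n4: "n mod 4 = 0" and n3: "n \<ge> 3" and j: "j < 4"
  defines "R \<equiv> {U ((4 * i + j) mod n) | i. i < n} \<union> {V ((4 * i + j + 2) mod n) | i. i < n}"
  shows "(U x \<in> R \<longleftrightarrow> x < n \<and> x mod 4 = j) \<and> (V x \<in> R \<longleftrightarrow> x < n \<and> x mod 4 = (j+2) mod 4)"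
proof
  have np: "n > 0" using n3 by simp
  show "U x \<in> R \<longleftrightarrow> x < n \<and> x mod 4 = j"
  proof
    assume "U x \<in> R"
    then obtain i where "x = (4*i+j) mod n" unfolding R_def by auto
    then show "x < n \<and> x mod 4 = j" using np mm4[OF n4, of "4*i+j"] j by simp
  next
    assume a: "x < n \<and> x mod 4 = j"
    have "4 * (x div 4) + x mod 4 = x" by (rule mult_div_mod_eq)
    then have "x = (4 * (x div 4) + j) mod n" using a by simp
    moreover have "x div 4 < n" using a by linarith
    ultimately show "U x \<in> R" unfolding R_def by blast
  qed
  show "V x \<in> R \<longleftrightarrow> x < n \<and> x mod 4 = (j+2) mod 4"
  proof
    assume "V x \<in> R"
    then obtain i where "x = (4*i+j+2) mod n" unfolding R_def by auto
    moreover have "(4*i+j+2) mod 4 = (j+2) mod 4"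
      by (metis add.assoc mod_mult_self3 mult.commute)
    ultimately show "x < n \<and> x mod 4 = (j+2) mod 4" using np mm4[OF n4, of "4*i+j+2"] by simp
  next
    assume a: "x < n \<and> x mod 4 = (j+2) mod 4"
    define d where "d = x + 2*n - (j+2)"
    have dd: "d + (j+2) = x + 2*n" unfolding d_def using n3 j by simp
    have "4 dvd n" using n4 by (rule mod_0_imp_dvd)
    then have "4 dvd 2*n" by (rule dvd_mult)
    then have "(2*n) mod 4 = 0" by (rule dvd_imp_mod_0)
    then have "d mod 4 = 0" using modM1[OF dd] a by simp
    then have "4 * (d div 4) = d" by auto
    then have "(4 * (d div 4) + j + 2) mod n = (x + 2*n) mod n" using dd by simp
    also have "\<dots> = x" using a by simp
    finally have "x = (4 * (d div 4) + j + 2) mod n" by simp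
    moreover have "d div 4 < n" using dd a by linarith
    ultimately show "V x \<in> R" unfolding R_def by blast
  qed
qed



lemma closed_gen:
  assumes pc: "perfect_code Vs adj C" and x: "x \<in> Vs"
    and nb: "\<forall>y. adj x y \<longleftrightarrow> y = a \<or> y = b \<or> y = c"
    and d: "a \<noteq> b" "a \<noteq> c" "b \<noteq> c"
  shows "of_bool (x \<in> C) + of_bool (a \<in> C) + of_bool (b \<in> C) + of_bool (c \<in> C) = (1::int)"
proof (cases "x \<in> C")
  case True
  have ind: "\<forall>x\<in>C. \<forall>y\<in>C. \<not> adj x y" using pc unfolding perfect_code_def by blast
  then have "a \<notin> C" "b \<notin> C" "c \<notin> C" using True nb by blast+
  then show ?thesis using True by simp
next
  case False
  then have "\<exists>!y. y \<in> C \<and> adj x y" using pc x unfolding perfect_code_def by blast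
  then obtain y where y: "y \<in> C" "adj x y" and u: "\<And>z. z \<in> C \<Longrightarrow> adj x z \<Longrightarrow> z = y" by blast
  have ya: "y = a \<or> y = b \<or> y = c" using nb y by blast
  have "a \<in> C \<Longrightarrow> a = y" "b \<in> C \<Longrightarrow> b = y" "c \<in> C \<Longrightarrow> c = y" using u nb by blast+
  then show ?thesis using ya y(1) d False by auto
qed

lemma one3_iff: "(of_bool a + of_bool b + of_bool c = (1::int)) \<longleftrightarrow>
  (a \<and> \<not>b \<and> \<not>c) \<or> (\<not>a \<and> b \<and> \<not>c) \<or> (\<not>a \<and> \<not>b \<and> c)"
  by (cases a; cases b; cases c; simp)

lemma ex1_gen:
  assumes nb: "\<forall>y. P y \<longleftrightarrow> y = a \<or> y = b \<or> y = c"
    and s: "of_bool (a \<in> C) + of_bool (b \<in> C) + of_bool (c \<in> C) = (1::int)"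
  shows "\<exists>!y. y \<in> C \<and> P y"
  using s unfolding one3_iff using nb by (elim disjE) auto

lemma distU: "n \<ge> 3 \<Longrightarrow> b < n \<Longrightarrow> U ((b+1) mod n) \<noteq> U ((b+(n-1)) mod n)"
  by (auto simp: mod2)

lemma distV: "0 < k \<Longrightarrow> k < n \<Longrightarrow> 2*k \<noteq> n \<Longrightarrow> b < n \<Longrightarrow> V ((b+k) mod n) \<noteq> V ((b+(n-k)) mod n)"
  by (auto simp: mod2 split: if_splits)

lemma numA: assumes "(j::nat) < 4" shows "(j+1) mod 4 \<noteq> j \<and> (j+3) mod 4 \<noteq> j \<and> j \<noteq> (j+2) mod 4"
  using m4[OF assms] by (elim disjE) simp_all

lemma numB: assumes "(r::nat) < 4" "rk = 1 \<or> rk = 3"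
  shows "(r + rk) mod 4 \<noteq> r \<and> (r + (4 - rk) mod 4) mod 4 \<noteq> r"
  using m4[OF assms(1)] assms(2) by (elim disjE) simp_all

lemma numC: assumes "(r::nat) < 4" "j < 4" "r \<noteq> j"
  shows "of_bool ((r+1) mod 4 = j) + of_bool ((r+3) mod 4 = j) + of_bool (r = (j+2) mod 4) = (1::int)"
  using m4[OF assms(1)] m4[OF assms(2)] assms(3) by (elim disjE) simp_all

lemma numD: assumes "(r::nat) < 4" "j < 4" "rk = 1 \<or> rk = 3" "r \<noteq> (j+2) mod 4"
  shows "of_bool (r = j) + of_bool ((r + rk) mod 4 = (j+2) mod 4) + of_bool ((r + (4 - rk) mod 4) mod 4 = (j+2) mod 4) = (1::int)"
  using m4[OF assms(1)] m4[OF assms(2)] assms(3) assms(4) by (elim disjE) simp_all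

lemma rev_dir:
  fixes n k j :: nat
  assumes n3: "n \<ge> 3" and k0: "0 < k" and kn: "k < n" and n4: "n mod 4 = 0" and kodd: "k mod 2 = 1"
    and j: "j < 4"
    and memU: "\<And>x. U x \<in> C \<longleftrightarrow> x < n \<and> x mod 4 = j"
    and memV: "\<And>x. V x \<in> C \<longleftrightarrow> x < n \<and> x mod 4 = (j+2) mod 4"
  shows "perfect_code (gp_verts n) (gp_adj n k) C"
proof -
  have rk: "k mod 4 = 1 \<or> k mod 4 = 3"
  proof -
    have "(k mod 4) mod 2 = 1" using kodd by (simp add: mod_mod_cancel)
    moreover have "k mod 4 < 4" by simp
    ultimately show ?thesis using m4[of "k mod 4"] by auto
  qed
  have n1: "(n - 1) mod 4 = 3" using sub4[of 1 n] n3 n4 by simp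
  have nk: "(n - k) mod 4 = (4 - k mod 4) mod 4" using sub4[of k n] kn n4 by simp
  have np: "n > 0" using n3 by simp
  have r1: "((a+1) mod n) mod 4 = (a mod 4 + 1) mod 4" for a
    unfolding mm4[OF n4] by (rule mod_add_left_eq[symmetric])
  have r2: "((a+(n-1)) mod n) mod 4 = (a mod 4 + 3) mod 4" for a
    unfolding mm4[OF n4] mod_add_eq[symmetric, of a "n-1" 4] n1 by simp
  have r3: "((a+k) mod n) mod 4 = (a mod 4 + k mod 4) mod 4" for a
    unfolding mm4[OF n4] by (rule mod_add_eq[symmetric])
  have r4: "((a+(n-k)) mod n) mod 4 = (a mod 4 + (4 - k mod 4) mod 4) mod 4" for a
    unfolding mm4[OF n4] mod_add_eq[symmetric, of a "n-k" 4] nk by simp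
  have mU1: "U ((a+1) mod n) \<in> C \<longleftrightarrow> (a mod 4 + 1) mod 4 = j" for a
    using memU r1 np by simp
  have mU2: "U ((a+(n-1)) mod n) \<in> C \<longleftrightarrow> (a mod 4 + 3) mod 4 = j" for a
    using memU r2 np by simp
  have mV1: "V ((a+k) mod n) \<in> C \<longleftrightarrow> (a mod 4 + k mod 4) mod 4 = (j+2) mod 4" for a
    using memV r3 np by simp
  have mV2: "V ((a+(n-k)) mod n) \<in> C \<longleftrightarrow> (a mod 4 + (4 - k mod 4) mod 4) mod 4 = (j+2) mod 4" for a
    using memV r4 np by simp
  have cases_x: "\<exists>a<n. x = U a \<or> x = V a" if "x \<in> gp_verts n" for x
    using that unfolding gp_verts_def by auto
  have sub: "C \<subseteq> gp_verts n"
  proof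
    fix x assume "x \<in> C"
    then show "x \<in> gp_verts n" unfolding gp_verts_def using memU memV by (cases x) auto
  qed
  have ind: "\<forall>x\<in>C. \<forall>y\<in>C. \<not> gp_adj n k x y"
  proof (intro ballI)
    fix x y assume x: "x \<in> C" and y: "y \<in> C"
    obtain a where a: "a < n" "x = U a \<or> x = V a" using cases_x[of x] x sub by auto
    from a(2) show "\<not> gp_adj n k x y"
    proof
      assume xa: "x = U a"
      then have am: "a mod 4 = j" using x memU by simp
      have "\<not> U ((a+1) mod n) \<in> C" "\<not> U ((a+(n-1)) mod n) \<in> C" "V a \<notin> C"
        unfolding mU1 mU2 memV using numA[OF j] am by simp_all
      then show ?thesis unfolding xa adjU[OF n3 a(1)] using y by blast
    next
      assume xa: "x = V a"
      then have am: "a mod 4 = (j+2) mod 4" using x memV by simp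
      have "(j+2) mod 4 \<noteq> j" using numA[OF j] by simp
      moreover have "(a mod 4 + k mod 4) mod 4 \<noteq> a mod 4" "(a mod 4 + (4 - k mod 4) mod 4) mod 4 \<noteq> a mod 4"
        using numB[OF _ rk, of "a mod 4"] by simp_all
      ultimately have "U a \<notin> C" "V ((a+k) mod n) \<notin> C" "V ((a+(n-k)) mod n) \<notin> C"
        unfolding mV1 mV2 memU using am by simp_all
      then show ?thesis unfolding xa adjV[OF k0 kn a(1)] using y by blast
    qed
  qed
  have uniq: "\<forall>x\<in>gp_verts n - C. \<exists>!c. c \<in> C \<and> gp_adj n k x c"
  proof
    fix x assume x: "x \<in> gp_verts n - C"
    obtain a where a: "a < n" "x = U a \<or> x = V a" using cases_x[of x] x by auto
    from a(2) show "\<exists>!c. c \<in> C \<and> gp_adj n k x c"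
    proof
      assume xa: "x = U a"
      then have am: "a mod 4 \<noteq> j" using x memU a(1) by simp
      have "of_bool (U ((a+1) mod n) \<in> C) + of_bool (U ((a+(n-1)) mod n) \<in> C) + of_bool (V a \<in> C) = (1::int)"
        unfolding mU1 mU2 memV using a(1) numC[OF _ j am] by simp
      then show ?thesis unfolding xa by (rule ex1_gen[rotated]) (use adjU[OF n3 a(1)] in blast)
    next
      assume xa: "x = V a"
      then have am: "a mod 4 \<noteq> (j+2) mod 4" using x memV a(1) by simp
      have "of_bool (U a \<in> C) + of_bool (V ((a+k) mod n) \<in> C) + of_bool (V ((a+(n-k)) mod n) \<in> C) = (1::int)"
        unfolding mV1 mV2 memU using a(1) numD[OF _ j rk am] by simp
      then show ?thesis unfolding xa by (rule ex1_gen[rotated]) (use adjV[OF k0 kn a(1)] in blast)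
    qed
  qed
  show ?thesis unfolding perfect_code_def using sub ind uniq by blast
qed



theorem theorem1p1:
  fixes n k :: nat and C :: "gpv set"
  assumes "n \<ge> 3" and "0 < k" and "k < n" and "(2 * k) mod n \<noteq> 0"
    and "C \<subseteq> gp_verts n"
  shows "perfect_code (gp_verts n) (gp_adj n k) C \<longleftrightarrow>
    (n mod 4 = 0 \<and> k mod 2 = 1 \<and>
     (\<exists>j\<in>{0,1,2,3::nat}. C = {U ((4 * i + j) mod n) | i. i < n}
                            \<union> {V ((4 * i + j + 2) mod n) | i. i < n}))"
proof
  note n3 = assms(1) and k0 = assms(2) and kn = assms(3) and k2 = assms(4) and sub = assms(5)
  have np: "n > 0" using n3 by simp
  have k2': "2 * k \<noteq> n" using k2 by auto
  assume pc: "perfect_code (gp_verts n) (gp_adj n k) C"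
  define f where "f i = (U (i mod n) \<in> C)" for i
  define h where "h i = (V (i mod n) \<in> C)" for i
  have fp: "\<forall>i. f (i + n) = f i" unfolding f_def by simp
  have hp: "\<forall>i. h (i + n) = h i" unfolding h_def by simp
  have inU: "U b \<in> gp_verts n" "V b \<in> gp_verts n" if "b < n" for b
    using that unfolding gp_verts_def by auto
  have O: "\<forall>i. of_bool (f i) + of_bool (f (i+1)) + of_bool (f (i+2)) + of_bool (h (i+1)) = (1::int)"
  proof
    fix i
    define b where "b = (i+1) mod n"
    have b: "b < n" using np unfolding b_def by simp
    have nb: "\<forall>y. gp_adj n k (U b) y \<longleftrightarrow> y = U ((b+1) mod n) \<or> y = U ((b+(n-1)) mod n) \<or> y = V b"
      using adjU[OF n3 b] by blast
    have cl: "of_bool (U b \<in> C) + of_bool (U ((b+1) mod n) \<in> C) + of_bool (U ((b+(n-1)) mod n) \<in> C) + of_bool (V b \<in> C) = (1::int)"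
      by (rule closed_gen[OF pc inU(1)[OF b] nb]) (use distU[OF n3 b] in auto)
    have "i + 1 + 1 = i + 2" by simp
    then have e1: "(b+1) mod n = (i+2) mod n" unfolding b_def by (metis mod_add_left_eq)
    have "i + 1 + (n - 1) = i + n" using np by simp
    then have e2: "(b+(n-1)) mod n = i mod n" unfolding b_def by (metis mod_add_left_eq mod_add_self2)
    show "of_bool (f i) + of_bool (f (i+1)) + of_bool (f (i+2)) + of_bool (h (i+1)) = (1::int)"
      using cl[unfolded e1 e2] unfolding f_def h_def b_def by linarith
  qed
  have I: "\<forall>i. of_bool (f (i+k)) + of_bool (h (i+k)) + of_bool (h (i+2*k)) + of_bool (h i) = (1::int)"
  proof
    fix i
    define b where "b = (i+k) mod n"
    have b: "b < n" using np unfolding b_def by simp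
    have nb: "\<forall>y. gp_adj n k (V b) y \<longleftrightarrow> y = U b \<or> y = V ((b+k) mod n) \<or> y = V ((b+(n-k)) mod n)"
      using adjV[OF k0 kn b] by blast
    have cl: "of_bool (V b \<in> C) + of_bool (U b \<in> C) + of_bool (V ((b+k) mod n) \<in> C) + of_bool (V ((b+(n-k)) mod n) \<in> C) = (1::int)"
      by (rule closed_gen[OF pc inU(2)[OF b] nb]) (use distV[OF k0 kn k2' b] in auto)
    have "i + k + k = i + 2*k" by simp
    then have e1: "(b+k) mod n = (i+2*k) mod n" unfolding b_def by (metis mod_add_left_eq)
    have "i + k + (n - k) = i + n" using kn by simp
    then have e2: "(b+(n-k)) mod n = i mod n" unfolding b_def by (metis mod_add_left_eq mod_add_self2)
    show "of_bool (f (i+k)) + of_bool (h (i+k)) + of_bool (h (i+2*k)) + of_bool (h i) = (1::int)"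
      using cl[unfolded e1 e2] unfolding f_def h_def b_def by linarith
  qed
  note cr = core[OF n3 k0 kn fp hp O I]
  have n4: "n mod 4 = 0" and kodd: "k mod 2 = 1" using cr by simp_all
  from conjunct2[OF conjunct2[OF cr]] obtain j where
    jj: "j < 4 \<and> (\<forall>x. f x \<longleftrightarrow> x mod 4 = j) \<and> (\<forall>x. h x \<longleftrightarrow> x mod 4 = (j+2) mod 4)"
    by (elim exE)
  have j: "j < 4" and fj: "\<forall>x. f x \<longleftrightarrow> x mod 4 = j" and hj: "\<forall>x. h x \<longleftrightarrow> x mod 4 = (j+2) mod 4"
    using jj by simp_all
  note sm = setmem[OF n4 n3 j]
  have "C = {U ((4 * i + j) mod n) | i. i < n} \<union> {V ((4 * i + j + 2) mod n) | i. i < n}"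
  proof (rule set_eqI)
    fix y show "y \<in> C \<longleftrightarrow> y \<in> {U ((4 * i + j) mod n) | i. i < n} \<union> {V ((4 * i + j + 2) mod n) | i. i < n}"
    proof (cases y)
      case (U x)
      have "U x \<in> C \<longleftrightarrow> x < n \<and> f x"
        using sub unfolding f_def gp_verts_def by auto
      then show ?thesis unfolding U using sm[of x] fj by simp
    next
      case (V x)
      have "V x \<in> C \<longleftrightarrow> x < n \<and> h x"
        using sub unfolding h_def gp_verts_def by auto
      then show ?thesis unfolding V using sm[of x] hj by simp
    qed
  qed
  moreover have "j \<in> {0,1,2,3}" using j by auto
  ultimately show "n mod 4 = 0 \<and> k mod 2 = 1 \<and>
     (\<exists>j\<in>{0,1,2,3::nat}. C = {U ((4 * i + j) mod n) | i. i < n}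
                            \<union> {V ((4 * i + j + 2) mod n) | i. i < n})" using n4 kodd by blast
next
  note n3 = assms(1) and k0 = assms(2) and kn = assms(3)
  assume "n mod 4 = 0 \<and> k mod 2 = 1 \<and>
     (\<exists>j\<in>{0,1,2,3::nat}. C = {U ((4 * i + j) mod n) | i. i < n}
                            \<union> {V ((4 * i + j + 2) mod n) | i. i < n})"
  note as = this
  have n4: "n mod 4 = 0" and kodd: "k mod 2 = 1" using as by simp_all
  from conjunct2[OF conjunct2[OF as]] obtain j where j: "j \<in> {0,1,2,3::nat}"
    and C: "C = {U ((4 * i + j) mod n) | i. i < n} \<union> {V ((4 * i + j + 2) mod n) | i. i < n}"
    by (elim bexE)
  have j4: "j < 4" using j by auto
  note sm = setmem[OF n4 n3 j4]
  show "perfect_code (gp_verts n) (gp_adj n k) C"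
    by (rule rev_dir[OF n3 k0 kn n4 kodd j4]) (use sm in \<open>simp_all add: C\<close>)
qed


end
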